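(* Fix the setup in the context (system data $f,g$, state constraint set $\mathcal X$, gain $\mathbf K$, matrices $Q,P$, constant $\gamma$, disturbance level $\overline w\ge0$). There exist constants $\underline\alpha,\underline\beta\ge0$ such that the following holds. For all $\alpha\ge\underline\alpha$, $\beta\ge\underline\beta$, all $N\in\mathbb{N}$, $T>0$, $\underline t\ge0$ (with $\overline t=\underline t+NT$, $t_k=\underline t+kT$), every dynamically admissible trajectory $\mathbf x_d:[\underline t,\overline t]\to\mathbb{R}^n$ satisfying $\Omega_{\mathbf x_d}(t,\overline w)\subseteq\mathcal X$ for all $t\in[\underline t,\overline t]$, and every collection of points $\overline{\mathbf x}_0,\dots,\overline{\mathbf x}_{N-1}\in\mathcal X$: for every $k\in\{0,\dots,N-1\}$, every $t\in[t_k,t_{k+1})$ and every $\mathbf x\in\Omega_{\mathbf x_d}(t,\overline w)$, $$|k^{\rm fbl}_{\mathbf x_d}(\mathbf x,t)|\le\tfrac12\boldsymbol\sigma_{\mathbf x_d}(t)^\top M_{\alpha,\beta}\boldsymbol\sigma_{\mathbf x_d}(t)+N_{\alpha,\beta}(\overline{\mathbf x}_k)^\top\boldsymbol\sigma_{\mathbf x_d}(t)+\Gamma_{\alpha,\beta}(\overline{\mathbf x}_k),$$ where $\boldsymbol\sigma_{\mathbf x_d}(t)=\big(\|\mathbf x_d(t)-\overline{\mathbf x}_k\|_2,\ |\dot x_d^n(t)-f(\overline{\mathbf x}_k)|\big)^\top$ for $t\in[t_k,t_{k+1})$.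
   Context: System: $\dot{\mathbf x}=\mathbf f(\mathbf x)+\mathbf g(\mathbf x)u+\mathbf w(t)$ with $\mathbf x\in\mathbb{R}^n$, $u\in\mathbb{R}$, $\mathbf f(\mathbf x)=A_0\mathbf x+e_nf(\mathbf x)$, $\mathbf g(\mathbf x)=e_ng(\mathbf x)$, where $A_0=\begin{bmatrix}\mathbf 0&I\\0&\mathbf 0^\top\end{bmatrix}\in\mathbb{R}^{n\times n}$, $e_n$ is the last standard basis vector, and $f,g:\mathbb{R}^n\to\mathbb{R}$ are continuously differentiable with $f(\mathbf 0)=0$, $g(\mathbf x)\ne0$ for all $\mathbf x$. A dynamically admissible trajectory is a piecewise continuously differentiable $\mathbf x_d:[\underline t,\overline t]\to\mathbb{R}^n$ for which there is a piecewise continuous $u_d$ with $\dot{\mathbf x}_d=\mathbf f(\mathbf x_d)+\mathbf g(\mathbf x_d)u_d$ almost everywhere; $\dot x_d^n(t)$ is the $n$-th component of $\dot{\mathbf x}_d(t)$ (at the finitely many nondifferentiability points take the right derivative). $\mathcal X=\{\mathbf x:\mathbf L_j^\top\mathbf x\le\ell_j,\ j=1,\dots,q\}$ is a compact convex polytope with $\mathbf 0$ in its interior. $\mathbf K\in\mathbb{R}^n$ is such that $F=A_0-e_n\mathbf K^\top$ is Hurwitz; $Q\in\mathbb{S}^n_{\succ0}$ and $P\in\mathbb{S}^n_{\succ0}$ is the unique solution of $F^\top P+PF=-Q$; $\gamma=4\lambda_{\max}(P)^3/\lambda_{\min}(Q)^2$; $\overline e=\sqrt{\gamma\overline w^2/\lambda_{\min}(P)}$.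 $\Omega_{\mathbf x_d}(t,\overline w)=\{\mathbf x:(\mathbf x-\mathbf x_d(t))^\top P(\mathbf x-\mathbf x_d(t))\le\gamma\overline w^2\}$. Controller: $k^{\rm fbl}_{\mathbf x_d}(\mathbf x,t)=g(\mathbf x)^{-1}\big(-(f(\mathbf x)-\dot x_d^n(t))-\mathbf K^\top(\mathbf x-\mathbf x_d(t))\big)$. For $\alpha,\beta\ge0$: $M_{\alpha,\beta}=\pi_{\rm PSD}\!\left(\begin{bmatrix}2\alpha\beta&\beta\\\beta&0\end{bmatrix}\right)$, where $\pi_{\rm PSD}$ is the projection of a symmetric matrix onto the positive semidefinite cone (keeping nonnegative eigenvalues, zeroing negative ones); $N_{\alpha,\beta}(\overline{\mathbf x})=\big(2\alpha\beta\overline e+\alpha|g(\overline{\mathbf x})^{-1}|+\beta\|\mathbf K\|_2\overline e,\ |g(\overline{\mathbf x})^{-1}|+\beta\overline e\big)^\top$; $\Gamma_{\alpha,\beta}(\overline{\mathbf x})=\overline e(\beta\overline e+|g(\overline{\mathbf x})^{-1}|)(\alpha+\|\mathbf K\|_2)$. *)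

theory Defs
  imports "HOL-Analysis.Analysis"
begin

text \<open>State space R^n is modelled as real^'n with a finite, linearly ordered index
  type 'n (n = CARD('n) >= 1); the order identifies the components 1..n.\<close>

definition lastidx :: "('n::{finite,linorder})" where
  "lastidx = Max UNIV"

definition e_last :: "real^('n::{finite,linorder})" where
  "e_last = axis lastidx 1"

text \<open>A_0: ones on the superdiagonal (entry (i,j)=1 iff j is the immediate successor of i).\<close>
definition A0 :: "real^(('n::{finite,linorder}))^(('n::{finite,linorder}))" where
  "A0 = (\<chi> i j. if i < j \<and> (\<forall>k. i < k \<longrightarrow> j \<le> k) then 1 else 0)"

definition outer :: "real^'n \<Rightarrow> real^'m \<Rightarrow> real^'m^'n" where
  "outer a b = (\<chi> i j. a$i * b$j)"

definition sys_f :: "(real^('n::{finite,linorder}) \<Rightarrow> real) \<Rightarrow> real^('n::{finite,linorder}) \<Rightarrow> real^('n::{finite,linorder})" where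
  "sys_f f x = A0 *v x + f x *\<^sub>R e_last"

definition sys_g :: "(real^('n::{finite,linorder}) \<Rightarrow> real) \<Rightarrow> real^('n::{finite,linorder}) \<Rightarrow> real^('n::{finite,linorder})" where
  "sys_g g x = g x *\<^sub>R e_last"

definition C1_fun :: "(real^'n \<Rightarrow> real) \<Rightarrow> bool" where
  "C1_fun f \<longleftrightarrow> (\<exists>f'. (\<forall>x. (f has_derivative blinfun_apply (f' x)) (at x)) \<and> continuous_on UNIV f')"

definition hurwitz :: "real^'n^'n \<Rightarrow> bool" where
  "hurwitz F \<longleftrightarrow> (\<forall>(lam::complex) (v::complex^'n). v \<noteq> 0 \<and>
      (\<chi> i j. complex_of_real (F$i$j)) *v v = lam *s v \<longrightarrow> Re lam < 0)"

definition sym_pd :: "real^'n^'n \<Rightarrow> bool" where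
  "sym_pd A \<longleftrightarrow> transpose A = A \<and> (\<forall>x. x \<noteq> 0 \<longrightarrow> 0 < x \<bullet> (A *v x))"

definition real_eigvals :: "real^'n^'n \<Rightarrow> real set" where
  "real_eigvals A = {lam. \<exists>v. v \<noteq> 0 \<and> A *v v = lam *\<^sub>R v}"

definition lambda_max :: "real^'n^'n \<Rightarrow> real" where
  "lambda_max A = Max (real_eigvals A)"

definition lambda_min :: "real^'n^'n \<Rightarrow> real" where
  "lambda_min A = Min (real_eigvals A)"

definition piecewise_continuous_on :: "real \<Rightarrow> real \<Rightarrow> (real \<Rightarrow> real) \<Rightarrow> bool" where
  "piecewise_continuous_on a b u \<longleftrightarrow> (\<exists>D. finite D \<and> continuous_on ({a..b} - D) u \<and>
     (\<forall>d\<in>D. (a < d \<longrightarrow> (\<exists>l. (u \<longlongrightarrow> l) (at_left d))) \<and>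
             (d < b \<longrightarrow> (\<exists>l. (u \<longlongrightarrow> l) (at_right d)))))"

definition dyn_admissible ::
  "(real^('n::{finite,linorder}) \<Rightarrow> real) \<Rightarrow> (real^('n::{finite,linorder}) \<Rightarrow> real) \<Rightarrow> real \<Rightarrow> real \<Rightarrow> (real \<Rightarrow> real^('n::{finite,linorder})) \<Rightarrow> bool" where
  "dyn_admissible f g a b xd \<longleftrightarrow> xd piecewise_C1_differentiable_on {a..b} \<and>
     (\<exists>ud. piecewise_continuous_on a b ud \<and>
        (AE t in lebesgue. t \<in> {a..b} \<longrightarrow>
           (xd has_vector_derivative (sys_f f (xd t) + ud t *\<^sub>R sys_g g (xd t))) (at t)))"

text \<open>n-th component of the derivative of x_d; taken as the right derivative
  (which coincides with the derivative where x_d is differentiable).\<close>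
definition xd_dot_n :: "(real \<Rightarrow> real^('n::{finite,linorder})) \<Rightarrow> real \<Rightarrow> real" where
  "xd_dot_n xd t = (THE v. ((\<lambda>s. xd s $ lastidx) has_real_derivative v) (at_right t))"

definition Omega :: "real^'n^'n \<Rightarrow> real \<Rightarrow> real \<Rightarrow> (real \<Rightarrow> real^'n) \<Rightarrow> real \<Rightarrow> (real^'n) set" where
  "Omega P gam wbar xd t = {x. (x - xd t) \<bullet> (P *v (x - xd t)) \<le> gam * wbar\<^sup>2}"

definition kfbl ::
  "(real^('n::{finite,linorder}) \<Rightarrow> real) \<Rightarrow> (real^('n::{finite,linorder}) \<Rightarrow> real) \<Rightarrow> real^('n::{finite,linorder}) \<Rightarrow> (real \<Rightarrow> real^('n::{finite,linorder})) \<Rightarrow> real^('n::{finite,linorder}) \<Rightarrow> real \<Rightarrow> real" where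
  "kfbl f g K xd x t = inverse (g x) * (- (f x - xd_dot_n xd t) - K \<bullet> (x - xd t))"

definition pi_PSD :: "real^2^2 \<Rightarrow> real^2^2" where
  "pi_PSD A = (SOME B. \<exists>U D. orthogonal_matrix U \<and> (\<forall>i j. i \<noteq> j \<longrightarrow> D$i$j = 0) \<and>
      A = U ** D ** transpose U \<and> B = U ** (\<chi> i j. max (D$i$j) 0) ** transpose U)"

definition M_ab :: "real \<Rightarrow> real \<Rightarrow> real^2^2" where
  "M_ab \<alpha> \<beta> = pi_PSD (vector [vector [2*\<alpha>*\<beta>, \<beta>], vector [\<beta>, 0]])"

definition N_ab :: "(real^'n \<Rightarrow> real) \<Rightarrow> real^'n \<Rightarrow> real \<Rightarrow> real \<Rightarrow> real \<Rightarrow> real^'n \<Rightarrow> real^2" where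
  "N_ab g K ebar \<alpha> \<beta> xb = vector [2*\<alpha>*\<beta>*ebar + \<alpha> * \<bar>inverse (g xb)\<bar> + \<beta> * norm K * ebar,
                                  \<bar>inverse (g xb)\<bar> + \<beta> * ebar]"

definition Gamma_ab :: "(real^'n \<Rightarrow> real) \<Rightarrow> real^'n \<Rightarrow> real \<Rightarrow> real \<Rightarrow> real \<Rightarrow> real^'n \<Rightarrow> real" where
  "Gamma_ab g K ebar \<alpha> \<beta> xb = ebar * (\<beta> * ebar + \<bar>inverse (g xb)\<bar>) * (\<alpha> + norm K)"

definition sigma_vec :: "(real^('n::{finite,linorder}) \<Rightarrow> real) \<Rightarrow> (real \<Rightarrow> real^('n::{finite,linorder})) \<Rightarrow> real^('n::{finite,linorder}) \<Rightarrow> real \<Rightarrow> real^2" where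
  "sigma_vec f xd xb t = vector [norm (xd t - xb), \<bar>xd_dot_n xd t - f xb\<bar>]"

end

theory Submission
  imports Defs
begin



lemma sym_inner:
  fixes A :: "real^'n^'n"
  assumes "transpose A = A"
  shows "(A *v x) \<bullet> y = x \<bullet> (A *v y)"
proof -
  have "x \<bullet> (A *v y) = (x v* A) \<bullet> y" by (simp add: dot_lmul_matrix)
  also have "x v* A = A *v x" by (metis assms vector_transpose_matrix)
  finally show ?thesis by simp
qed

lemma quad_expand:
  fixes A :: "real^'n^'n"
  assumes "transpose A = A"
  shows "(u + t *\<^sub>R w) \<bullet> (A *v (u + t *\<^sub>R w)) = u \<bullet> (A *v u) + 2 * t * (w \<bullet> (A *v u)) + t^2 * (w \<bullet> (A *v w))"
proof -
  have "u \<bullet> (A *v w) = w \<bullet> (A *v u)" using sym_inner[OF assms, of u w] by (simp add: inner_commute)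
  then show ?thesis
    by (simp add: matrix_vector_right_distrib inner_add_left inner_add_right matrix_vector_mult_scaleR
         algebra_simps power2_eq_square)
qed

lemma rayleigh:
  fixes A :: "real^'n^'n"
  assumes sym: "transpose A = A"
  shows "\<exists>u. norm u = 1 \<and> A *v u = (u \<bullet> (A *v u)) *\<^sub>R u \<and> (\<forall>v. (u \<bullet> (A *v u)) * (norm v)^2 \<le> v \<bullet> (A *v v))"
proof -
  have cont: "continuous_on (sphere 0 1) (\<lambda>v::real^'n. v \<bullet> (A *v v))"
    by (intro continuous_intros continuous_on_id linear_continuous_on) (simp add: bounded_linear_def matrix_vector_mul_linear)
  have ne: "sphere (0::real^'n) 1 \<noteq> {}"
    by (metis ex_in_conv mem_sphere_0 norm_sgn one_neq_zero norm_zero sgn_zero vector_choose_size zero_le_one)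
  obtain u where u: "u \<in> sphere 0 1" and umin: "\<forall>y\<in>sphere 0 1. u \<bullet> (A *v u) \<le> y \<bullet> (A *v y)"
    using continuous_attains_inf[OF compact_sphere ne cont] by blast
  define m where "m = u \<bullet> (A *v u)"
  have nu: "norm u = 1" using u by simp
  have low: "m * (norm v)^2 \<le> v \<bullet> (A *v v)" for v
  proof (cases "v = 0")
    case True then show ?thesis by simp
  next
    case False
    let ?s = "(1 / norm v) *\<^sub>R v"
    have "?s \<in> sphere 0 1" using False by simp
    then have "m \<le> ?s \<bullet> (A *v ?s)" using umin m_def by blast
    also have "?s \<bullet> (A *v ?s) = (v \<bullet> (A *v v)) / (norm v)^2"
      by (simp add: matrix_vector_mult_scaleR power2_eq_square)
    finally show ?thesis using False by (simp add: field_simps)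
  qed
  have low': "m * (v \<bullet> v) \<le> v \<bullet> (A *v v)" for v
    using low[of v] by (simp add: power2_norm_eq_inner)
  define w where "w = A *v u - m *\<^sub>R u"
  define c where "c = w \<bullet> w"
  define H where "H = w \<bullet> (A *v w) - m * (w \<bullet> w)"
  have H0: "0 \<le> H" using low'[of w] H_def by simp
  have uu: "u \<bullet> u = 1" using nu by (simp add: norm_eq_1)
  have key: "0 \<le> - 2 * s * c + s^2 * H" for s
  proof -
    define z where "z = u + (-s) *\<^sub>R w"
    have 1: "m * (z \<bullet> z) \<le> m + 2 * (-s) * (w \<bullet> (A *v u)) + s^2 * (w \<bullet> (A *v w))"
      using low'[of z] quad_expand[OF sym, of u "-s" w] m_def unfolding z_def by simp
    have 2: "z \<bullet> z = 1 - 2 * s * (u \<bullet> w) + s^2 * (w \<bullet> w)"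
      unfolding z_def using uu
      by (simp add: inner_add_left inner_add_right inner_commute algebra_simps power2_eq_square)
    have 3: "w \<bullet> (A *v u) = c + m * (u \<bullet> w)"
      by (simp add: c_def w_def inner_diff_left inner_diff_right algebra_simps inner_commute)
    show ?thesis using 1 2 3 unfolding H_def by (simp add: algebra_simps)
  qed
  have "c \<le> 0"
  proof (rule ccontr)
    assume "\<not> c \<le> 0"
    then have cp: "c > 0" by simp
    define s where "s = c / (H + 1)"
    have "0 \<le> - 2 * s * c + s^2 * H" by (rule key)
    also have "- 2 * s * c + s^2 * H = s * (- 2 * c + s * H)" by (simp add: power2_eq_square algebra_simps)
    finally have A: "0 \<le> s * (- 2 * c + s * H)" .
    have sp: "s > 0" using cp H0 s_def by simp
    have "s * H \<le> c" using H0 cp unfolding s_def by (simp add: field_simps)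
    then have "- 2 * c + s * H < 0" using cp by simp
    then have "s * (- 2 * c + s * H) < 0" using sp by (simp add: mult_pos_neg)
    then show False using A by simp
  qed
  then have "w = 0" using c_def by (metis inner_eq_zero_iff inner_ge_zero order_antisym)
  then have "A *v u = m *\<^sub>R u" using w_def by simp
  then show ?thesis using nu low m_def by blast
qed



lemma eig_pos:
  fixes P :: "real^'n^'n"
  assumes "sym_pd P" "lam \<in> real_eigvals P"
  shows "0 < lam"
proof -
  obtain v where v: "v \<noteq> 0" "P *v v = lam *\<^sub>R v" using assms(2) unfolding real_eigvals_def by blast
  have "0 < v \<bullet> (P *v v)" using assms(1) v(1) unfolding sym_pd_def by blast
  also have "\<dots> = lam * (v \<bullet> v)" using v(2) by simp
  finally have "0 < lam * (v \<bullet> v)" .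
  moreover have "0 < v \<bullet> v" using v(1) by simp
  ultimately show ?thesis by (rule zero_less_mult_pos2)
qed

lemma eig_finite:
  fixes P :: "real^'n^'n"
  assumes sym: "transpose P = P"
  shows "finite (real_eigvals P)"
proof -
  define E where "E = real_eigvals P"
  define ev where "ev lam = (SOME v. v \<noteq> 0 \<and> P *v v = lam *\<^sub>R v)" for lam
  have evp: "ev lam \<noteq> 0 \<and> P *v ev lam = lam *\<^sub>R ev lam" if "lam \<in> E" for lam
  proof -
    have "\<exists>v. v \<noteq> 0 \<and> P *v v = lam *\<^sub>R v" using that unfolding E_def real_eigvals_def by simp
    then show ?thesis unfolding ev_def by (rule someI_ex)
  qed
  have inj: "inj_on ev E"
  proof (rule inj_onI)
    fix a b assume ab: "a \<in> E" "b \<in> E" "ev a = ev b"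
    have "a *\<^sub>R ev a = P *v ev a" using evp[OF ab(1)] by simp
    also have "\<dots> = b *\<^sub>R ev a" using evp[OF ab(2)] ab(3) by simp
    finally have "a *\<^sub>R ev a = b *\<^sub>R ev a" .
    then show "a = b" using evp[OF ab(1)] by (simp only: scaleR_cancel_right) simp
  qed
  have orth: "pairwise orthogonal (ev ` E)"
    unfolding pairwise_def orthogonal_def
  proof (intro ballI impI)
    fix x y assume xy: "x \<in> ev ` E" "y \<in> ev ` E" "x \<noteq> y"
    then obtain a b where ab: "a \<in> E" "b \<in> E" "x = ev a" "y = ev b" by blast
    then have "a \<noteq> b" using xy(3) by blast
    have "(P *v x) \<bullet> y = x \<bullet> (P *v y)" by (rule sym_inner[OF sym])
    then have "a * (x \<bullet> y) = b * (x \<bullet> y)" using evp[OF ab(1)] evp[OF ab(2)] ab(3,4) by simp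
    then show "x \<bullet> y = 0" using \<open>a \<noteq> b\<close> by simp
  qed
  have "0 \<notin> ev ` E"
  proof
    assume "0 \<in> ev ` E"
    then obtain a where a: "a \<in> E" "0 = ev a" by blast
    show False using evp[OF a(1)] a(2) by simp
  qed
  then have "independent (ev ` E)" using orth pairwise_orthogonal_independent by blast
  then have "finite (ev ` E)" by (rule finiteI_independent)
  then show ?thesis using finite_imageD inj E_def by blast
qed

lemma lmin_facts:
  fixes P :: "real^'n^'n"
  assumes "sym_pd P"
  shows "0 < lambda_min P \<and> (\<forall>v. lambda_min P * (norm v)^2 \<le> v \<bullet> (P *v v))"
proof -
  have sym: "transpose P = P" using assms sym_pd_def by blast
  obtain u where u: "norm u = 1" "P *v u = (u \<bullet> (P *v u)) *\<^sub>R u"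
    and low: "\<forall>v. (u \<bullet> (P *v u)) * (norm v)^2 \<le> v \<bullet> (P *v v)"
    using rayleigh[OF sym] by blast
  have mem: "u \<bullet> (P *v u) \<in> real_eigvals P" unfolding real_eigvals_def using u by (auto intro!: exI[of _ u])
  have fin: "finite (real_eigvals P)" by (rule eig_finite[OF sym])
  have le: "lambda_min P \<le> u \<bullet> (P *v u)" unfolding lambda_min_def using fin mem by simp
  have inn: "lambda_min P \<in> real_eigvals P" unfolding lambda_min_def using fin mem by (intro Min_in) auto
  have pos: "0 < lambda_min P" by (rule eig_pos[OF assms inn])
  have "lambda_min P * (norm v)^2 \<le> v \<bullet> (P *v v)" for v
  proof -
    have "lambda_min P * (norm v)^2 \<le> (u \<bullet> (P *v u)) * (norm v)^2"
      using le by (simp add: mult_right_mono)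
    then show ?thesis using low by (meson order_trans)
  qed
  then show ?thesis using pos by blast
qed



lemma diag_quad:
  fixes X :: "real^'n^'n"
  assumes "\<forall>i j. i \<noteq> j \<longrightarrow> X$i$j = 0"
  shows "y \<bullet> (X *v y) = (\<Sum>i\<in>UNIV. X$i$i * (y$i)^2)"
proof -
  have "(X *v y)$i = X$i$i * y$i" for i
  proof -
    have "(X *v y)$i = (\<Sum>j\<in>UNIV. X$i$j * y$j)" by (simp add: matrix_vector_mult_def)
    also have "\<dots> = (\<Sum>j\<in>UNIV. if j = i then X$i$i * y$i else 0)"
      by (rule sum.cong) (use assms in auto)
    finally show ?thesis by simp
  qed
  then show ?thesis by (simp add: inner_vec_def power2_eq_square algebra_simps)
qed

lemma quad_conj:
  fixes U X :: "real^'n^'n"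
  shows "s \<bullet> ((U ** X ** transpose U) *v s) = (transpose U *v s) \<bullet> (X *v (transpose U *v s))"
proof -
  have "(U ** X ** transpose U) *v s = U *v (X *v (transpose U *v s))"
    by (simp only: matrix_vector_mul_assoc matrix_mul_assoc)
  moreover have "s \<bullet> (U *v z) = (transpose U *v s) \<bullet> z" for z
    by (simp only: dot_lmul_matrix[symmetric] transpose_matrix_vector)
  ultimately show ?thesis by simp
qed

lemma psd_proj_ge:
  fixes U D :: "real^'n^'n"
  assumes diag: "\<forall>i j. i \<noteq> j \<longrightarrow> D$i$j = 0"
  shows "s \<bullet> ((U ** D ** transpose U) *v s) \<le> s \<bullet> ((U ** (\<chi> i j. max (D$i$j) 0) ** transpose U) *v s)"
proof -
  define y where "y = transpose U *v s"
  have d2: "\<forall>i j. i \<noteq> j \<longrightarrow> (\<chi> i j. max (D$i$j) 0 :: real^'n^'n)$i$j = 0" using diag by simp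
  have "s \<bullet> ((U ** D ** transpose U) *v s) = (\<Sum>i\<in>UNIV. D$i$i * (y$i)^2)"
    unfolding quad_conj y_def[symmetric] by (rule diag_quad[OF diag])
  also have "\<dots> \<le> (\<Sum>i\<in>UNIV. max (D$i$i) 0 * (y$i)^2)"
    by (intro sum_mono mult_right_mono) auto
  also have "\<dots> = s \<bullet> ((U ** (\<chi> i j. max (D$i$j) 0) ** transpose U) *v s)"
    unfolding quad_conj y_def[symmetric] diag_quad[OF d2] by simp
  finally show ?thesis .
qed

lemma eig_decomp_2:
  fixes A :: "real^2^2"
  assumes sym: "transpose A = A"
  shows "\<exists>U D. orthogonal_matrix U \<and> (\<forall>i j. i \<noteq> j \<longrightarrow> D$i$j = 0) \<and> A = U ** D ** transpose U"
proof -
  obtain u where nu: "norm u = 1" and eu: "A *v u = (u \<bullet> (A *v u)) *\<^sub>R u"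
    using rayleigh[OF sym] by blast
  define m where "m = u \<bullet> (A *v u)"
  define p where "p = u$1"
  define q where "q = u$2"
  define a where "a = A$1$1"
  define b where "b = A$1$2"
  define c where "c = A$2$2"
  have b2: "A$2$1 = b"
  proof -
    have "(transpose A)$1$2 = A$1$2" using sym by simp
    then show ?thesis unfolding b_def by (simp add: transpose_def)
  qed
  have pq: "p*p + q*q = 1"
  proof -
    have "u \<bullet> u = 1" using nu by (simp add: norm_eq_1)
    then show ?thesis by (simp add: inner_vec_def sum_2 p_def q_def)
  qed
  have e1: "a*p + b*q = m*p" using arg_cong[OF eu, of "\<lambda>v. v$1"]
    by (simp add: matrix_vector_mult_def sum_2 a_def b_def p_def q_def m_def)
  have e2: "b*p + c*q = m*q" using arg_cong[OF eu, of "\<lambda>v. v$2"] b2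
    by (simp add: matrix_vector_mult_def sum_2 c_def p_def q_def m_def)
  define U :: "real^2^2" where "U = vector [vector [p, -q], vector [q, p]]"
  define D :: "real^2^2" where "D = vector [vector [m, 0], vector [0, a + c - m]]"
  have orth: "orthogonal_matrix U"
    unfolding orthogonal_matrix_def U_def
    by (simp add: vec_eq_iff forall_2 matrix_matrix_mult_def sum_2 transpose_def mat_def pq
         algebra_simps)
  have diag: "\<forall>i j. i \<noteq> j \<longrightarrow> D$i$j = 0"
    unfolding D_def by (simp add: forall_2)
  have 11: "a = m*p*p + (a+c-m)*q*q" using e1 e2 pq by algebra
  have 12: "b = m*p*q - (a+c-m)*q*p" using e1 e2 pq by algebra
  have 22: "c = m*q*q + (a+c-m)*p*p" using e1 e2 pq by algebra
  have "A = U ** D ** transpose U"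
    unfolding U_def D_def
    apply (simp add: vec_eq_iff forall_2 matrix_matrix_mult_def sum_2 transpose_def)
    using 11 12 22 b2 a_def b_def c_def by (simp add: algebra_simps)
  then show ?thesis using orth diag by blast
qed

lemma pi_PSD_ge:
  fixes A :: "real^2^2"
  assumes sym: "transpose A = A"
  shows "s \<bullet> (A *v s) \<le> s \<bullet> (pi_PSD A *v s)"
proof -
  obtain U D where ex: "orthogonal_matrix U \<and> (\<forall>i j. i \<noteq> j \<longrightarrow> D$i$j = 0) \<and> A = U ** D ** transpose U"
    using eig_decomp_2[OF sym] by blast
  have "\<exists>B U D. orthogonal_matrix U \<and> (\<forall>i j. i \<noteq> j \<longrightarrow> D$i$j = 0) \<and>
      A = U ** D ** transpose U \<and> B = U ** (\<chi> i j. max (D$i$j) 0) ** transpose U"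
    using ex by blast
  then obtain U' D' where h: "orthogonal_matrix U'" "\<forall>i j. i \<noteq> j \<longrightarrow> D'$i$j = 0"
      "A = U' ** D' ** transpose U'" "pi_PSD A = U' ** (\<chi> i j. max (D'$i$j) 0) ** transpose U'"
    unfolding pi_PSD_def by (rule someI_ex[THEN exE]) blast
  show ?thesis using psd_proj_ge[OF h(2), of s U'] h(3,4) by simp
qed



lemma C1_lip:
  fixes f :: "real^'n \<Rightarrow> real"
  assumes "C1_fun f" "compact X" "convex X"
  shows "\<exists>B\<ge>0. \<forall>x\<in>X. \<forall>y\<in>X. \<bar>f x - f y\<bar> \<le> B * norm (x - y)"
proof -
  obtain f' where d: "\<forall>x. (f has_derivative blinfun_apply (f' x)) (at x)" and c: "continuous_on UNIV f'"
    using assms(1) unfolding C1_fun_def by blast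
  have "compact (f' ` X)" using compact_continuous_image[OF continuous_on_subset[OF c] assms(2)] by simp
  then obtain b where b: "b > 0" "\<forall>z\<in>f' ` X. norm z \<le> b" using compact_imp_bounded bounded_pos by metis
  have "\<bar>f x - f y\<bar> \<le> b * norm (x - y)" if "x \<in> X" "y \<in> X" for x y
  proof -
    have "norm (f x - f y) \<le> b * norm (x - y)"
    proof (rule differentiable_bound[OF assms(3) _ _ that, where f' = "\<lambda>x. blinfun_apply (f' x)"])
      fix z assume "z \<in> X"
      show "(f has_derivative blinfun_apply (f' z)) (at z within X)"
        using d has_derivative_at_withinI by blast
      show "onorm (blinfun_apply (f' z)) \<le> b" using b(2) \<open>z \<in> X\<close> by (simp add: norm_blinfun.rep_eq[symmetric])
    qed
    then show ?thesis by simp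
  qed
  then show ?thesis using b(1) by (intro exI[of _ b]) auto
qed

lemma C1_cont:
  fixes g :: "real^'n \<Rightarrow> real"
  assumes "C1_fun g"
  shows "continuous_on S g"
proof -
  obtain g' where d: "\<forall>x. (g has_derivative blinfun_apply (g' x)) (at x)"
    using assms unfolding C1_fun_def by blast
  show ?thesis
    by (rule continuous_at_imp_continuous_on) (use d has_derivative_continuous in blast)
qed

lemma inv_lip:
  fixes g :: "real^'n \<Rightarrow> real"
  assumes "C1_fun g" "compact X" "convex X" "\<forall>x. g x \<noteq> 0"
  shows "\<exists>B\<ge>0. \<forall>x\<in>X. \<forall>y\<in>X. \<bar>inverse (g x) - inverse (g y)\<bar> \<le> B * norm (x - y)"
proof (cases "X = {}")
  case True then show ?thesis by auto
next
  case False
  obtain Lg where Lg: "Lg \<ge> 0" "\<forall>x\<in>X. \<forall>y\<in>X. \<bar>g x - g y\<bar> \<le> Lg * norm (x - y)"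
    using C1_lip[OF assms(1-3)] by blast
  have cont: "continuous_on X (\<lambda>x. \<bar>g x\<bar>)" using C1_cont[OF assms(1)] by (intro continuous_intros)
  obtain x0 where x0: "x0 \<in> X" "\<forall>y\<in>X. \<bar>g x0\<bar> \<le> \<bar>g y\<bar>"
    using continuous_attains_inf[OF assms(2) False cont] by blast
  define c where "c = \<bar>g x0\<bar>"
  have cpos: "c > 0" using assms(4) c_def by simp
  have "\<bar>inverse (g x) - inverse (g y)\<bar> \<le> (Lg / c^2) * norm (x - y)" if xy: "x \<in> X" "y \<in> X" for x y
  proof -
    have gx: "c \<le> \<bar>g x\<bar>" and gy: "c \<le> \<bar>g y\<bar>" using x0 xy c_def by auto
    have "inverse (g x) - inverse (g y) = (g y - g x) / (g x * g y)"
      using assms(4) by (simp add: field_simps)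
    then have "\<bar>inverse (g x) - inverse (g y)\<bar> = \<bar>g x - g y\<bar> / (\<bar>g x\<bar> * \<bar>g y\<bar>)"
      by (simp add: abs_mult abs_minus_commute)
    also have "\<dots> \<le> \<bar>g x - g y\<bar> / c^2"
    proof (rule divide_left_mono)
      show "c^2 \<le> \<bar>g x\<bar> * \<bar>g y\<bar>" using gx gy cpos by (simp add: power2_eq_square mult_mono)
      show "0 < \<bar>g x\<bar> * \<bar>g y\<bar> * c^2" using assms(4) cpos by simp
    qed simp
    also have "\<dots> \<le> Lg * norm (x - y) / c^2"
      using Lg(2) xy cpos by (simp add: divide_right_mono)
    finally show ?thesis by simp
  qed
  then show ?thesis using Lg(1) cpos by (intro exI[of _ "Lg / c^2"]) auto
qed

lemma M0_sym: "transpose (vector [vector [a, b], vector [b, c]] :: real^2^2) = vector [vector [a, b], vector [b, c]]"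
  by (simp add: vec_eq_iff forall_2 transpose_def)

lemma M0_quad: "(vector [s1, s2] :: real^2) \<bullet> ((vector [vector [a, b], vector [b, c]] :: real^2^2) *v vector [s1, s2])
   = a * s1^2 + 2 * b * s1 * s2 + c * s2^2"
  by (simp add: inner_vec_def sum_2 matrix_vector_mult_def power2_eq_square algebra_simps)

lemma main_arith:
  fixes G e s1 s2 \<alpha> \<beta> k :: real
  shows "(G + \<beta> * (e + s1)) * (\<alpha> * (e + s1) + s2 + k * e) =
    1/2 * (2*\<alpha>*\<beta> * s1^2 + 2 * \<beta> * s1 * s2 + 0 * s2^2)
    + ((2*\<alpha>*\<beta>*e + \<alpha> * G + \<beta> * k * e) * s1 + (G + \<beta> * e) * s2)
    + e * (\<beta> * e + G) * (\<alpha> + k)"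
  by (simp add: algebra_simps power2_eq_square)

theorem theorem1:
  fixes f g :: "real^('n::{finite,linorder}) \<Rightarrow> real"
    and q :: nat and L :: "nat \<Rightarrow> real^('n::{finite,linorder})" and ell :: "nat \<Rightarrow> real"
    and X :: "(real^('n::{finite,linorder})) set"
    and K :: "real^('n::{finite,linorder})" and Q P :: "real^('n::{finite,linorder})^('n::{finite,linorder})"
    and \<gamma> ebar wbar :: real
  assumes f_C1: "C1_fun f" and g_C1: "C1_fun g"
    and f0: "f 0 = 0" and g_nz: "\<forall>x. g x \<noteq> 0"
    and X_def: "X = {x. \<forall>j\<in>{1..q}. L j \<bullet> x \<le> ell j}"
    and X_compact: "compact X" and X_int: "0 \<in> interior X"
    and K_hurwitz: "hurwitz (A0 - outer e_last K)"
    and Q_pd: "sym_pd Q" and P_pd: "sym_pd P"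
    and lyap: "transpose (A0 - outer e_last K) ** P + P ** (A0 - outer e_last K) = - Q"
    and gamma_def: "\<gamma> = 4 * lambda_max P ^ 3 / lambda_min Q ^ 2"
    and wbar_nn: "0 \<le> wbar"
    and ebar_def: "ebar = sqrt (\<gamma> * wbar\<^sup>2 / lambda_min P)"
  shows "\<exists>\<alpha>l \<beta>l. 0 \<le> \<alpha>l \<and> 0 \<le> \<beta>l \<and>
    (\<forall>\<alpha> \<beta> (N::nat) T tl (xd :: real \<Rightarrow> real^('n::{finite,linorder})) (xb :: nat \<Rightarrow> real^('n::{finite,linorder})).
       \<alpha>l \<le> \<alpha> \<longrightarrow> \<beta>l \<le> \<beta> \<longrightarrow> 0 < T \<longrightarrow> 0 \<le> tl \<longrightarrow>
       dyn_admissible f g tl (tl + real N * T) xd \<longrightarrow>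
       (\<forall>t\<in>{tl..tl + real N * T}. Omega P \<gamma> wbar xd t \<subseteq> X) \<longrightarrow>
       (\<forall>k<N. xb k \<in> X) \<longrightarrow>
       (\<forall>k<N. \<forall>t\<in>{tl + real k * T ..< tl + real (Suc k) * T}. \<forall>x\<in>Omega P \<gamma> wbar xd t.
          \<bar>kfbl f g K xd x t\<bar> \<le>
            1/2 * (sigma_vec f xd (xb k) t \<bullet> (M_ab \<alpha> \<beta> *v sigma_vec f xd (xb k) t))
            + N_ab g K ebar \<alpha> \<beta> (xb k) \<bullet> sigma_vec f xd (xb k) t
            + Gamma_ab g K ebar \<alpha> \<beta> (xb k)))"
proof -
  have Xeq: "X = (\<Inter>j\<in>{1..q}. {x. L j \<bullet> x \<le> ell j})" using X_def by auto
  have convX: "convex X" unfolding Xeq by (intro convex_INT convex_halfspace_le)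
  obtain Bf where Bf: "Bf \<ge> 0" "\<forall>x\<in>X. \<forall>y\<in>X. \<bar>f x - f y\<bar> \<le> Bf * norm (x - y)"
    using C1_lip[OF f_C1 X_compact convX] by blast
  obtain Bg where Bg: "Bg \<ge> 0" "\<forall>x\<in>X. \<forall>y\<in>X. \<bar>inverse (g x) - inverse (g y)\<bar> \<le> Bg * norm (x - y)"
    using inv_lip[OF g_C1 X_compact convX g_nz] by blast
  obtain lm where lm: "lm = lambda_min P" "0 < lm" "\<forall>v. lm * (norm v)^2 \<le> v \<bullet> (P *v v)"
    using lmin_facts[OF P_pd] by blast
  show ?thesis
  proof (rule exI[of _ Bf], rule exI[of _ Bg], intro conjI allI impI ballI Bf(1) Bg(1))
    fix \<alpha> \<beta> :: real and N :: nat and T tl :: real and xd :: "real \<Rightarrow> real^('n::{finite,linorder})" and xb :: "nat \<Rightarrow> real^('n::{finite,linorder})"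
      and k :: nat and t :: real and x :: "real^('n::{finite,linorder})"
    assume al: "Bf \<le> \<alpha>" and bl: "Bg \<le> \<beta>" and Tp: "0 < T" and tl0: "0 \<le> tl"
      and dyn: "dyn_admissible f g tl (tl + real N * T) xd"
      and OmX: "\<forall>t\<in>{tl..tl + real N * T}. Omega P \<gamma> wbar xd t \<subseteq> X"
      and xbX: "\<forall>k<N. xb k \<in> X" and kN: "k < N"
      and tk: "t \<in> {tl + real k * T ..< tl + real (Suc k) * T}" and xO: "x \<in> Omega P \<gamma> wbar xd t"
    have "tl \<le> t" using tk Tp by (auto intro: order_trans[rotated] simp: )
    moreover have "t \<le> tl + real N * T"
    proof -
      have "real (Suc k) * T \<le> real N * T" using kN Tp by (intro mult_right_mono) auto
      then show ?thesis using tk by auto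
    qed
    ultimately have xX: "x \<in> X" using OmX xO by auto
    have xbk: "xb k \<in> X" using xbX kN by blast
    define v where "v = x - xd t"
    define d where "d = norm v"
    have vP: "v \<bullet> (P *v v) \<le> \<gamma> * wbar^2" using xO unfolding Omega_def v_def by simp
    have "lm * d^2 \<le> \<gamma> * wbar^2" using lm(3) vP d_def by (meson order_trans)
    then have "d^2 \<le> \<gamma> * wbar^2 / lm" using lm(2) by (simp add: field_simps)
    then have "sqrt (d^2) \<le> ebar" unfolding ebar_def lm(1)[symmetric] by (rule real_sqrt_le_mono)
    then have de: "d \<le> ebar" using d_def by simp
    have d0: "0 \<le> d" using d_def by simp
    define e where "e = ebar"
    define G where "G = \<bar>inverse (g (xb k))\<bar>"
    define s1 where "s1 = norm (xd t - xb k)"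
    define s2 where "s2 = \<bar>xd_dot_n xd t - f (xb k)\<bar>"
    define D where "D = norm (x - xb k)"
    have e0: "0 \<le> e" using d0 de e_def by simp
    have s10: "0 \<le> s1" and s20: "0 \<le> s2" and G0: "0 \<le> G" using s1_def s2_def G_def by auto
    have D_le: "D \<le> e + s1"
    proof -
      have "x - xb k = v + (xd t - xb k)" using v_def by simp
      then have "D \<le> d + s1" unfolding D_def d_def s1_def by (metis norm_triangle_ineq)
      then show ?thesis using de e_def by simp
    qed
    have D0: "0 \<le> D" using D_def by simp
    have Ai: "\<bar>inverse (g x)\<bar> \<le> G + \<beta> * (e + s1)"
    proof -
      have "\<bar>inverse (g x)\<bar> \<le> G + \<bar>inverse (g x) - inverse (g (xb k))\<bar>" unfolding G_def by linarith
      also have "\<bar>inverse (g x) - inverse (g (xb k))\<bar> \<le> Bg * D" using Bg(2) xX xbk D_def by blast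
      also have "Bg * D \<le> \<beta> * (e + s1)" using bl D_le D0 Bg(1) by (meson mult_mono order_trans)
      finally show ?thesis by simp
    qed
    have Fb: "\<bar>- (f x - xd_dot_n xd t) - K \<bullet> (x - xd t)\<bar> \<le> \<alpha> * (e + s1) + s2 + norm K * e"
    proof -
      have 1: "\<bar>f x - f (xb k)\<bar> \<le> \<alpha> * (e + s1)"
        using Bf(2) xX xbk D_def al D_le D0 Bf(1) by (meson mult_mono order_trans)
      have 2: "\<bar>K \<bullet> (x - xd t)\<bar> \<le> norm K * e"
      proof -
        have "\<bar>K \<bullet> (x - xd t)\<bar> \<le> norm K * d" unfolding d_def v_def by (rule Cauchy_Schwarz_ineq2)
        also have "\<dots> \<le> norm K * e" using de e_def by (simp add: mult_left_mono)
        finally show ?thesis .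
      qed
      have "\<bar>- (f x - xd_dot_n xd t) - K \<bullet> (x - xd t)\<bar> \<le> \<bar>f x - f (xb k)\<bar> + s2 + \<bar>K \<bullet> (x - xd t)\<bar>"
        unfolding s2_def by linarith
      then show ?thesis using 1 2 by linarith
    qed
    have "\<bar>kfbl f g K xd x t\<bar> = \<bar>inverse (g x)\<bar> * \<bar>- (f x - xd_dot_n xd t) - K \<bullet> (x - xd t)\<bar>"
      unfolding kfbl_def by (simp add: abs_mult)
    also have "\<dots> \<le> (G + \<beta> * (e + s1)) * (\<alpha> * (e + s1) + s2 + norm K * e)"
    proof -
      have "0 \<le> \<beta>" using bl Bg(1) by simp
      then have "0 \<le> G + \<beta> * (e + s1)" using G0 e0 s10 by simp
      then show ?thesis using Ai Fb by (intro mult_mono) auto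
    qed
    also have "\<dots> = 1/2 * (2*\<alpha>*\<beta> * s1^2 + 2 * \<beta> * s1 * s2 + 0 * s2^2)
      + ((2*\<alpha>*\<beta>*e + \<alpha> * G + \<beta> * norm K * e) * s1 + (G + \<beta> * e) * s2)
      + e * (\<beta> * e + G) * (\<alpha> + norm K)" by (rule main_arith)
    finally have fin: "\<bar>kfbl f g K xd x t\<bar> \<le> 1/2 * (2*\<alpha>*\<beta> * s1^2 + 2 * \<beta> * s1 * s2 + 0 * s2^2)
      + ((2*\<alpha>*\<beta>*e + \<alpha> * G + \<beta> * norm K * e) * s1 + (G + \<beta> * e) * s2)
      + e * (\<beta> * e + G) * (\<alpha> + norm K)" .
    have q1: "2*\<alpha>*\<beta> * s1^2 + 2 * \<beta> * s1 * s2 + 0 * s2^2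
       = sigma_vec f xd (xb k) t \<bullet> (vector [vector [2*\<alpha>*\<beta>, \<beta>], vector [\<beta>, 0]] *v sigma_vec f xd (xb k) t)"
      unfolding sigma_vec_def s1_def s2_def by (rule M0_quad[symmetric])
    have q2: "sigma_vec f xd (xb k) t \<bullet> (vector [vector [2*\<alpha>*\<beta>, \<beta>], vector [\<beta>, 0]] *v sigma_vec f xd (xb k) t) \<le> sigma_vec f xd (xb k) t \<bullet> (M_ab \<alpha> \<beta> *v sigma_vec f xd (xb k) t)"
      unfolding M_ab_def by (rule pi_PSD_ge[OF M0_sym])
    have q3: "(2*\<alpha>*\<beta>*e + \<alpha> * G + \<beta> * norm K * e) * s1 + (G + \<beta> * e) * s2
       = N_ab g K ebar \<alpha> \<beta> (xb k) \<bullet> sigma_vec f xd (xb k) t"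
      unfolding N_ab_def sigma_vec_def s1_def s2_def G_def e_def
      by (simp add: inner_vec_def sum_2)
    have q4: "e * (\<beta> * e + G) * (\<alpha> + norm K) = Gamma_ab g K ebar \<alpha> \<beta> (xb k)"
      unfolding Gamma_ab_def e_def G_def by simp
    show "\<bar>kfbl f g K xd x t\<bar> \<le>
            1/2 * (sigma_vec f xd (xb k) t \<bullet> (M_ab \<alpha> \<beta> *v sigma_vec f xd (xb k) t))
            + N_ab g K ebar \<alpha> \<beta> (xb k) \<bullet> sigma_vec f xd (xb k) t
            + Gamma_ab g K ebar \<alpha> \<beta> (xb k)"
    proof -
      define Z1 where "Z1 = 2*\<alpha>*\<beta> * s1^2 + 2 * \<beta> * s1 * s2 + 0 * s2^2"
      define Z2 where "Z2 = (2*\<alpha>*\<beta>*e + \<alpha> * G + \<beta> * norm K * e) * s1 + (G + \<beta> * e) * s2"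
      define Z3 where "Z3 = e * (\<beta> * e + G) * (\<alpha> + norm K)"
      define Y1 where "Y1 = sigma_vec f xd (xb k) t \<bullet> (M_ab \<alpha> \<beta> *v sigma_vec f xd (xb k) t)"
      have a1: "Z1 \<le> Y1" using q1 q2 unfolding Z1_def Y1_def by simp
      have a2: "\<bar>kfbl f g K xd x t\<bar> \<le> 1/2 * Z1 + Z2 + Z3" using fin unfolding Z1_def Z2_def Z3_def .
      show ?thesis using a1 a2 q3 q4 unfolding Y1_def[symmetric] Z2_def[symmetric] Z3_def[symmetric] by linarith
    qed
  qed
qed

end
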